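(* For every integer $m\ge 3$, $M(3,m)=2(m-1)$.
   Context: All graphs are finite and simple. A path $v_1,\ldots,v_r$ in a graph $G$ is degree-monotone if $\deg_G(v_1)\le\cdots\le\deg_G(v_r)$; its order is $r$. Let $mp(G)$ be the maximum order of a degree-monotone path in $G$. For a $2$-edge-coloring of $K_n$ with colors $1,2$, let $G_j$ be the spanning subgraph consisting of the edges colored $j$ (degrees taken in $G_j$). $M(m_1,m_2)$ is the minimum integer $M$ such that for every $n\ge M$ and every $2$-edge-coloring of $K_n$, either $mp(G_1)\ge m_1$ or $mp(G_2)\ge m_2$. *)

theory Defs
  imports Main
begin

text \<open>A graph on the finite vertex set V is given by an edge predicate E
  (assumed symmetric and irreflexive where used).\<close>

definition deg :: "'a set \<Rightarrow> ('a \<Rightarrow> 'a \<Rightarrow> bool) \<Rightarrow> 'a \<Rightarrow> nat" where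
  "deg V E v = card {w \<in> V. E v w}"

definition dm_path :: "'a set \<Rightarrow> ('a \<Rightarrow> 'a \<Rightarrow> bool) \<Rightarrow> 'a list \<Rightarrow> bool" where
  "dm_path V E p \<longleftrightarrow> p \<noteq> [] \<and> distinct p \<and> set p \<subseteq> V \<and>
     (\<forall>i. Suc i < length p \<longrightarrow> E (p ! i) (p ! Suc i) \<and>
        deg V E (p ! i) \<le> deg V E (p ! Suc i))"

definition mp :: "'a set \<Rightarrow> ('a \<Rightarrow> 'a \<Rightarrow> bool) \<Rightarrow> nat" where
  "mp V E = Max (insert 0 {length p | p. dm_path V E p})"

definition two_colouring :: "nat \<Rightarrow> (nat set \<Rightarrow> nat) \<Rightarrow> bool" where
  "two_colouring n col \<longleftrightarrow> (\<forall>e. e \<subseteq> {..<n} \<and> card e = 2 \<longrightarrow> col e \<in> {1, 2})"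

definition colour_graph :: "(nat set \<Rightarrow> nat) \<Rightarrow> nat \<Rightarrow> nat \<Rightarrow> nat \<Rightarrow> bool" where
  "colour_graph col j u v \<longleftrightarrow> u \<noteq> v \<and> col {u, v} = j"

definition arrows :: "nat \<Rightarrow> nat \<Rightarrow> nat \<Rightarrow> bool" where
  "arrows m1 m2 M \<longleftrightarrow> (\<forall>n \<ge> M. \<forall>col. two_colouring n col \<longrightarrow>
      mp {..<n} (colour_graph col 1) \<ge> m1 \<or> mp {..<n} (colour_graph col 2) \<ge> m2)"

definition M_num :: "nat \<Rightarrow> nat \<Rightarrow> nat" where
  "M_num m1 m2 = (LEAST M. arrows m1 m2 M)"

end

theory Submission
  imports Defs Complex_Main
begin

lemma dm_path_len_le:
  assumes "dm_path V E p" "finite V" shows "length p \<le> card V"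
proof -
  have "length p = card (set p)" using assms by (simp add: dm_path_def distinct_card)
  also have "\<dots> \<le> card V" using assms by (intro card_mono) (auto simp: dm_path_def)
  finally show ?thesis .
qed

lemma mp_ge:
  assumes "finite V" "dm_path V E p" shows "length p \<le> mp V E"
proof -
  have "{length p | p. dm_path V E p} \<subseteq> {..card V}"
    using dm_path_len_le[OF _ assms(1)] by auto
  hence fin: "finite (insert 0 {length p | p. dm_path V E p})"
    by (meson finite_atMost finite_insert finite_subset)
  show ?thesis unfolding mp_def using assms(2) by (intro Max_ge[OF fin]) auto
qed

lemma mp_lt:
  assumes "finite V" "0 < k" "\<And>p. dm_path V E p \<Longrightarrow> length p < k" shows "mp V E < k"
proof -
  have "{length p | p. dm_path V E p} \<subseteq> {..card V}"
    using dm_path_len_le[OF _ assms(1)] by auto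
  hence fin: "finite (insert 0 {length p | p. dm_path V E p})"
    by (meson finite_atMost finite_insert finite_subset)
  show ?thesis unfolding mp_def using assms by (subst Max_less_iff[OF fin]) auto
qed

lemma dm_pathI:
  assumes "p \<noteq> []" "distinct p" "set p \<subseteq> V"
    "\<And>i. Suc i < length p \<Longrightarrow> E (p!i) (p!Suc i)" "sorted (map (deg V E) p)"
  shows "dm_path V E p"
  unfolding dm_path_def using assms by (auto simp: sorted_iff_nth_Suc)

lemma clique_path:
  fixes S :: "'a::linorder set"
  assumes "finite S" "S \<subseteq> V" "S \<noteq> {}" "\<And>x y. x \<in> S \<Longrightarrow> y \<in> S \<Longrightarrow> x \<noteq> y \<Longrightarrow> E x y"
  shows "\<exists>p. dm_path V E p \<and> length p = card S"
proof -
  define p where "p = sort_key (deg V E) (sorted_list_of_set S)"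
  have sp: "set p = S" using assms by (simp add: p_def)
  have dp: "distinct p" using assms by (simp add: p_def)
  have lp: "length p = card S" using assms by (simp add: p_def)
  have "dm_path V E p"
  proof (rule dm_pathI)
    show "p \<noteq> []" using sp assms by auto
    show "distinct p" by fact
    show "set p \<subseteq> V" using sp assms by auto
    show "sorted (map (deg V E) p)" by (simp add: p_def)
    fix i assume i: "Suc i < length p"
    have "p!i \<in> S" "p!Suc i \<in> S" using i sp nth_mem by (metis Suc_lessD)+
    moreover have "p!i \<noteq> p!Suc i" using dp i by (simp add: nth_eq_iff_index_eq)
    ultimately show "E (p!i) (p!Suc i)" using assms by blast
  qed
  thus ?thesis using lp by blast
qed

lemma lower:
  assumes m3: "3 \<le> m" and M: "M \<le> 2*m-3"
  shows "\<not> arrows 3 m M"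
proof
  assume arr: "arrows 3 m M"
  define k where "k = m - 1"
  define n where "n = 2*m-3"
  define col :: "nat set \<Rightarrow> nat" where "col e = (if \<exists>u\<in>e. \<exists>v\<in>e. u<k \<and> k\<le>v then 1 else 2)" for e
  have tc: "two_colouring n col" unfolding two_colouring_def col_def by auto
  have E1: "colour_graph col 1 u v \<longleftrightarrow> u \<noteq> v \<and> ((u<k) \<noteq> (v<k))" for u v
    unfolding colour_graph_def col_def by auto
  have E2: "colour_graph col 2 u v \<longleftrightarrow> u \<noteq> v \<and> ((u<k) = (v<k))" for u v
    unfolding colour_graph_def col_def by auto
  let ?V = "{..<n}"
  have kn: "k < n" "n - k = m - 2" "k = m - 1" using m3 by (auto simp: k_def n_def)
  have deg1: "deg ?V (colour_graph col 1) u = (if u < k then m-2 else m-1)" if "u < n" for u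
  proof (cases "u < k")
    case True
    hence "{w \<in> ?V. colour_graph col 1 u w} = {k..<n}" using E1 by auto
    thus ?thesis using True kn by (simp add: deg_def)
  next
    case False
    hence "{w \<in> ?V. colour_graph col 1 u w} = {..<k}" using E1 kn by auto
    thus ?thesis using False kn by (simp add: deg_def)
  qed
  have mp1: "mp ?V (colour_graph col 1) < 3"
  proof (rule mp_lt)
    fix p assume dp: "dm_path ?V (colour_graph col 1) p"
    show "length p < 3"
    proof (rule ccontr)
      assume "\<not> length p < 3"
      hence l: "Suc 0 < length p" "Suc (Suc 0) < length p" by auto
      have e0: "colour_graph col 1 (p!0) (p!1)" "deg ?V (colour_graph col 1) (p!0) \<le> deg ?V (colour_graph col 1) (p!1)"
        using dp l unfolding dm_path_def by auto
      have e1: "colour_graph col 1 (p!1) (p!2)" "deg ?V (colour_graph col 1) (p!1) \<le> deg ?V (colour_graph col 1) (p!2)"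
        using dp l unfolding dm_path_def by (auto simp: numeral_2_eq_2)
      have sV: "set p \<subseteq> ?V" using dp unfolding dm_path_def by auto
      have gen: "\<And>i. i < length p \<Longrightarrow> p!i < n" using sV by (meson lessThan_iff nth_mem subsetD)
      have inV: "p!0 < n" "p!1 < n" "p!2 < n"
        using gen[of 0] gen[of 1] gen[of 2] l by (force simp: numeral_2_eq_2)+
      show False using e0 e1 inV deg1 E1 kn m3 by (auto split: if_splits)
    qed
  qed (auto)
  have mp2: "mp ?V (colour_graph col 2) < m"
  proof (rule mp_lt)
    fix p assume dp: "dm_path ?V (colour_graph col 2) p"
    have side: "\<forall>i<length p. (p!i < k) = (p!0 < k)"
    proof (intro allI impI)
      fix i assume "i < length p" thus "(p!i < k) = (p!0 < k)"
      proof (induction i)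
        case (Suc i)
        hence "colour_graph col 2 (p!i) (p!Suc i)" using dp unfolding dm_path_def by auto
        thus ?case using Suc E2 by auto
      qed simp
    qed
    have "length p = card (set p)" using dp by (simp add: dm_path_def distinct_card)
    also have "\<dots> < m"
    proof (cases "p!0 < k")
      case True
      hence "set p \<subseteq> {..<k}" using side by (auto simp: in_set_conv_nth)
      hence "card (set p) \<le> k" by (metis card_lessThan card_mono finite_lessThan)
      thus ?thesis using kn m3 by simp
    next
      case False
      have sV: "set p \<subseteq> ?V" using dp unfolding dm_path_def by auto
      have "x \<in> {k..<n}" if "x \<in> set p" for x
      proof -
        obtain i where i: "i < length p" "x = p!i" using \<open>x \<in> set p\<close> by (auto simp: in_set_conv_nth)
        have "\<not> x < k" using side i False by auto
        moreover have "x < n" using sV \<open>x \<in> set p\<close> by auto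
        ultimately show ?thesis by auto
      qed
      hence "set p \<subseteq> {k..<n}" by blast
      hence "card (set p) \<le> n - k" by (metis card_atLeastLessThan card_mono finite_atLeastLessThan)
      thus ?thesis using kn m3 by simp
    qed
    finally show "length p < m" .
  qed (use m3 in auto)
  have "n \<ge> M" using M by (simp add: n_def)
  with arr tc have "3 \<le> mp ?V (colour_graph col 1) \<or> m \<le> mp ?V (colour_graph col 2)"
    unfolding arrows_def by blast
  thus False using mp1 mp2 by linarith
qed

locale ub =
  fixes n m :: nat and col :: "nat set \<Rightarrow> nat"
  assumes tc: "two_colouring n col" and nm: "2*(m-1) \<le> n" and m3: "3 \<le> m"
    and no3: "\<not> 3 \<le> mp {..<n} (colour_graph col 1)"
begin

abbreviation "VV \<equiv> {..<n}"
abbreviation "G1 \<equiv> colour_graph col 1"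
abbreviation "G2 \<equiv> colour_graph col 2"
definition "d v = deg VV G1 v"
definition "N v = {w \<in> VV. G1 v w}"

lemma symG: "G1 u v = G1 v u"
  unfolding colour_graph_def by (auto simp: insert_commute)

lemma irr: "\<not> G1 v v" unfolding colour_graph_def by auto

lemma G2iff: "u \<in> VV \<Longrightarrow> v \<in> VV \<Longrightarrow> G2 u v \<longleftrightarrow> u \<noteq> v \<and> \<not> G1 u v"
proof -
  assume "u \<in> VV" "v \<in> VV"
  hence "u \<noteq> v \<Longrightarrow> col {u,v} \<in> {1,2}" using tc unfolding two_colouring_def by auto
  thus ?thesis unfolding colour_graph_def by auto
qed

lemma finN: "finite (N v)" unfolding N_def by auto
lemma dN: "d v = card (N v)" unfolding d_def N_def deg_def by simp
lemma NV: "N v \<subseteq> VV - {v}" unfolding N_def using irr by auto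

lemma deg2: assumes "v \<in> VV" shows "deg VV G2 v = n - 1 - d v"
proof -
  have "{w \<in> VV. G2 v w} = (VV - {v}) - N v" using assms G2iff unfolding N_def by auto
  hence "deg VV G2 v = card ((VV - {v}) - N v)" by (simp add: deg_def)
  also have "\<dots> = card (VV - {v}) - card (N v)" using NV by (intro card_Diff_subset) (auto simp: finN)
  also have "\<dots> = n - 1 - d v" using assms by (simp add: dN)
  finally show ?thesis .
qed

lemma no3': assumes "a \<in> VV" "b \<in> VV" "c \<in> VV" "G1 a b" "G1 b c" "a \<noteq> c" "d a \<le> d b" "d b \<le> d c"
  shows False
proof -
  have "dm_path VV G1 [a,b,c]"
    unfolding dm_path_def
  proof (intro conjI allI impI)
    fix i assume "Suc i < length [a,b,c]"
    hence "i = 0 \<or> i = 1" by auto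
    thus "G1 ([a,b,c]!i) ([a,b,c]!Suc i)" "deg VV G1 ([a,b,c]!i) \<le> deg VV G1 ([a,b,c]!Suc i)"
      using assms by (auto simp: d_def)
  qed (use assms irr in auto)
  hence "3 \<le> mp VV G1" using mp_ge[of VV G1 "[a,b,c]"] by simp
  thus False using no3 by simp
qed

definition "L = {v \<in> VV. \<exists>u \<in> VV. G1 v u \<and> d v < d u}"
definition "H = {v \<in> VV. \<exists>u \<in> VV. G1 v u \<and> d u < d v}"
definition "Q = VV - L - H"
definition "Q1 = {v \<in> Q. \<forall>u \<in> VV. G1 v u \<longrightarrow> v < u}"
definition "Q2 = Q - Q1"

lemma c1: assumes "v \<in> L" "G1 v u" "u \<in> VV" shows "d v < d u \<and> u \<in> H"
proof -
  obtain w where w: "w \<in> VV" "G1 v w" "d v < d w" using assms(1) unfolding L_def by auto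
  have vV: "v \<in> VV" using assms(1) unfolding L_def by auto
  have "d v < d u"
  proof (rule ccontr)
    assume "\<not> d v < d u"
    hence uw: "u \<noteq> w" "d u \<le> d v" using w by auto
    show False by (rule no3'[of u v w]) (use assms w vV uw symG[of u v] in auto)
  qed
  thus ?thesis using assms vV symG unfolding H_def by auto
qed

lemma c2: assumes "v \<in> H" "G1 v u" "u \<in> VV" shows "d u < d v \<and> u \<in> L"
proof -
  obtain w where w: "w \<in> VV" "G1 v w" "d w < d v" using assms(1) unfolding H_def by auto
  have vV: "v \<in> VV" using assms(1) unfolding H_def by auto
  have "d u < d v"
  proof (rule ccontr)
    assume "\<not> d u < d v"
    hence uw: "u \<noteq> w" "d v \<le> d u" using w by auto
    show False by (rule no3'[of w v u]) (use assms w vV uw symG[of w v] in auto)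
  qed
  thus ?thesis using assms vV symG unfolding L_def by auto
qed

lemma c3: "L \<inter> H = {}"
proof -
  { fix v assume v: "v \<in> L" "v \<in> H"
    then obtain u where u: "u \<in> VV" "G1 v u" "d u < d v" unfolding H_def by auto
    from c1[OF v(1) u(2) u(1)] u(3) have False by simp }
  thus ?thesis by auto
qed

lemma Qeq: assumes "v \<in> Q" "G1 v u" "u \<in> VV" shows "d u = d v"
proof -
  have "\<not> d v < d u" "\<not> d u < d v" using assms unfolding Q_def L_def H_def by auto
  thus ?thesis by linarith
qed

lemma c4: assumes "v \<in> Q" "G1 v u" "u \<in> VV" shows "N u = {v} \<and> u \<in> Q"
proof -
  have vV: "v \<in> VV" using assms unfolding Q_def by auto
  have eq: "d u = d v" using Qeq assms by auto
  have Nu: "N u = {v}"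
  proof
    show "{v} \<subseteq> N u" using vV assms symG unfolding N_def by auto
    show "N u \<subseteq> {v}"
    proof
      fix w assume w: "w \<in> N u"
      show "w \<in> {v}"
      proof (rule ccontr)
        assume wv: "w \<notin> {v}"
        have wV: "w \<in> VV" "G1 u w" using w unfolding N_def by auto
        show False
        proof (cases "d u \<le> d w")
          case True
          show False by (rule no3'[of v u w]) (use vV wV assms eq wv True in auto)
        next
          case False
          show False by (rule no3'[of w u v]) (use vV wV assms eq wv False symG[of v u] symG[of w u] in auto)
        qed
      qed
    qed
  qed
  have "u \<notin> L" "u \<notin> H"
  proof -
    have nb: "\<And>x. x \<in> VV \<Longrightarrow> G1 u x \<Longrightarrow> x = v" using Nu unfolding N_def by auto
    show "u \<notin> L" unfolding L_def using nb eq by auto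
    show "u \<notin> H" unfolding H_def using nb eq by auto
  qed
  thus ?thesis using Nu assms unfolding Q_def by auto
qed

definition "X = L \<union> Q1"

lemma Xsub: "X \<subseteq> VV" unfolding X_def L_def Q1_def Q_def by auto

lemma Xind: assumes "x \<in> X" "y \<in> X" shows "\<not> G1 x y"
proof
  assume g: "G1 x y"
  have xV: "x \<in> VV" "y \<in> VV" using assms Xsub by auto
  have QLH: "\<And>v. v \<in> Q1 \<Longrightarrow> v \<notin> L \<and> v \<notin> H" unfolding Q1_def Q_def by auto
  show False
  proof (cases "x \<in> L")
    case True
    hence "y \<in> H" using c1 g xV by auto
    thus False using assms c3 QLH unfolding X_def by auto
  next
    case False
    hence xQ: "x \<in> Q1" using assms unfolding X_def by auto
    show False
    proof (cases "y \<in> L")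
      case True
      hence "x \<in> H" using c1 g xV symG by auto
      thus False using QLH xQ by auto
    next
      case False
      hence yQ: "y \<in> Q1" using assms unfolding X_def by auto
      have "x < y" using xQ g xV unfolding Q1_def by auto
      moreover have "y < x" using yQ g xV symG[of x y] unfolding Q1_def by auto
      ultimately show False by simp
    qed
  qed
qed

lemma Xclique: "x \<in> X \<Longrightarrow> y \<in> X \<Longrightarrow> x \<noteq> y \<Longrightarrow> G2 x y"
  using Xind Xsub G2iff by blast

definition "f v = (SOME u. u \<in> VV \<and> G1 v u \<and> u < v)"

lemma f_prop: assumes "v \<in> Q2" shows "f v \<in> VV \<and> G1 v (f v) \<and> f v < v \<and> f v \<in> Q1 \<and> N (f v) = {v}"
proof -
  have "\<exists>u. u \<in> VV \<and> G1 v u \<and> u < v"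
  proof -
    have "v \<in> Q" "\<not> (\<forall>u \<in> VV. G1 v u \<longrightarrow> v < u)" using assms unfolding Q2_def Q1_def by blast+
    then obtain u where u: "u \<in> VV" "G1 v u" "\<not> v < u" by blast
    hence "u \<noteq> v" using irr by auto
    thus ?thesis using u by (intro exI[of _ u]) auto
  qed
  hence "f v \<in> VV \<and> G1 v (f v) \<and> f v < v" unfolding f_def by (rule someI_ex)
  hence fv: "f v \<in> VV" "G1 v (f v)" "f v < v" by auto
  have vQ: "v \<in> Q" using assms unfolding Q2_def by auto
  from c4[OF vQ fv(2) fv(1)] have c: "N (f v) = {v}" "f v \<in> Q" by auto
  have "\<forall>u \<in> VV. G1 (f v) u \<longrightarrow> f v < u"
  proof (intro ballI impI)
    fix u assume "u \<in> VV" "G1 (f v) u"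
    hence "u \<in> N (f v)" unfolding N_def by blast
    thus "f v < u" using c fv by simp
  qed
  hence "f v \<in> Q1" unfolding Q1_def using c by blast
  thus ?thesis using fv c by auto
qed

lemma Q2_le_Q1: "card Q2 \<le> card Q1" and fimg: "f ` Q2 \<subseteq> Q1" and finj: "inj_on f Q2"
proof -
  show fi: "f ` Q2 \<subseteq> Q1"
  proof (rule image_subsetI)
    fix x assume "x \<in> Q2"
    from f_prop[OF this] show "f x \<in> Q1" by simp
  qed
  show inj: "inj_on f Q2"
  proof
    fix x y assume x: "x \<in> Q2" and y: "y \<in> Q2" and fxy: "f x = f y"
    have "N (f x) = {x}" using f_prop[OF x] by simp
    moreover have "N (f y) = {y}" using f_prop[OF y] by simp
    ultimately have "{x} = {y}" using fxy by metis
    thus "x = y" by blast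
  qed
  show "card Q2 \<le> card Q1"
  proof -
    have "Q1 \<subseteq> VV" unfolding Q1_def Q_def by blast
    hence "finite Q1" by (rule finite_subset) simp
    thus ?thesis by (rule card_inj_on_le[OF inj fi])
  qed
qed

lemma dpos: assumes "v \<in> L \<union> H" shows "0 < d v"
proof -
  have "\<exists>u \<in> VV. G1 v u" using assms unfolding L_def H_def by auto
  then obtain u where "u \<in> VV" "G1 v u" by blast
  hence "u \<in> N v" unfolding N_def by blast
  hence "N v \<noteq> {}" by blast
  thus ?thesis using finN[of v] by (simp add: dN card_gt_0_iff)
qed

lemma c7: assumes "L \<noteq> {}" shows "card H < card L"
proof -
  have finL: "finite L" and finH: "finite H" unfolding L_def H_def by auto
  have NL: "{h \<in> H. G1 l h} = N l" if "l \<in> L" for l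
    using c1[OF that] unfolding N_def H_def by auto
  have NH: "{l. l \<in> L \<and> G1 l h} = N h" if "h \<in> H" for h
    using c2[OF that] symG unfolding N_def L_def by auto
  have one: "(\<Sum>x\<in>N v. 1 / real (d v)) = 1" if "v \<in> L \<union> H" for v
  proof -
    have "(\<Sum>x\<in>N v. 1 / real (d v)) = real (card (N v)) * (1 / real (d v) :: real)" by (rule sum_constant)
    thus ?thesis using dpos[OF that] by (simp add: dN)
  qed
  have "real (card H) = (\<Sum>h\<in>H. (1::real))" by simp
  also have "\<dots> = (\<Sum>h\<in>H. \<Sum>l | l \<in> L \<and> G1 l h. 1 / real (d h))"
  proof (rule sum.cong[OF refl])
    fix h assume h: "h \<in> H"
    have "(\<Sum>l | l \<in> L \<and> G1 l h. 1 / real (d h)) = (\<Sum>l\<in>N h. 1 / real (d h))"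
      by (simp only: NH[OF h])
    also have "\<dots> = 1" using one h by blast
    finally show "(1::real) = (\<Sum>l | l \<in> L \<and> G1 l h. 1 / real (d h))" by simp
  qed
  also have "\<dots> = (\<Sum>l\<in>L. \<Sum>h\<in>{h \<in> H. G1 l h}. 1 / real (d h))"
    by (rule sum.swap_restrict[OF finL finH, symmetric])
  also have "\<dots> < (\<Sum>l\<in>L. \<Sum>h\<in>{h \<in> H. G1 l h}. 1 / real (d l))"
  proof (rule sum_strict_mono[OF finL assms])
    fix l assume l: "l \<in> L"
    have ne: "N l \<noteq> {}" using l unfolding L_def N_def by auto
    show "(\<Sum>h\<in>{h \<in> H. G1 l h}. 1 / real (d h)) < (\<Sum>h\<in>{h \<in> H. G1 l h}. 1 / real (d l))"
      unfolding NL[OF l]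
    proof (rule sum_strict_mono[OF finN ne])
      fix h assume "h \<in> N l"
      hence "d l < d h" using c1[OF l] unfolding N_def by auto
      thus "1 / real (d h) < 1 / real (d l)" using dpos l
        by (simp add: frac_less2)
    qed
  qed
  also have "\<dots> = (\<Sum>l\<in>L. (1::real))"
  proof (rule sum.cong[OF refl])
    fix l assume l: "l \<in> L"
    have "(\<Sum>h\<in>{h \<in> H. G1 l h}. 1 / real (d l)) = (\<Sum>h\<in>N l. 1 / real (d l))"
      by (simp only: NL[OF l])
    also have "\<dots> = 1" using one l by blast
    finally show "(\<Sum>h\<in>{h \<in> H. G1 l h}. 1 / real (d l)) = (1::real)" .
  qed
  also have "\<dots> = real (card L)" by simp
  finally show ?thesis by simp
qed

lemma LH: "L = {} \<Longrightarrow> H = {}"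
proof -
  assume L: "L = {}"
  { fix h assume h: "h \<in> H"
    then obtain u where "u \<in> VV" "G1 h u" "d u < d h" unfolding H_def by auto
    hence "u \<in> L" using c2[OF h] by auto
    with L have False by auto }
  thus "H = {}" by auto
qed

lemma card_part: "card L + card H + card Q1 + card Q2 = n"
proof -
  have fin: "finite L" "finite H" "finite Q1" "finite Q2" unfolding L_def H_def Q1_def Q2_def Q_def by auto
  have "VV = ((L \<union> H) \<union> Q1) \<union> Q2" unfolding Q2_def Q_def Q1_def L_def H_def by auto
  hence "n = card (((L \<union> H) \<union> Q1) \<union> Q2)" by (metis card_lessThan)
  also have "\<dots> = card L + card H + card Q1 + card Q2"
  proof -
    have i1: "(L \<union> H) \<inter> Q1 = {}" "((L \<union> H) \<union> Q1) \<inter> Q2 = {}"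
      unfolding Q2_def Q1_def Q_def by auto
    have "card (L \<union> H) = card L + card H" using fin c3 by (simp add: card_Un_disjoint)
    moreover have "card ((L \<union> H) \<union> Q1) = card (L \<union> H) + card Q1"
      using fin i1 by (simp add: card_Un_disjoint)
    moreover have "card (((L \<union> H) \<union> Q1) \<union> Q2) = card ((L \<union> H) \<union> Q1) + card Q2"
      using fin i1 by (simp add: card_Un_disjoint)
    ultimately show ?thesis by simp
  qed
  finally show ?thesis by simp
qed

theorem main: "m \<le> mp VV G2"
proof (cases "L = {} \<and> card Q1 < m")
  case False
  define S where "S = (if L = {} then Q1 else X)"
  have S: "S \<subseteq> X" unfolding S_def X_def by auto
  have cS: "m \<le> card S"
  proof (cases "L = {}")
    case True thus ?thesis using False by (simp add: S_def)
  next
    case Lne: False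
    have a: "card H < card L" by (rule c7[OF Lne])
    have fL: "finite L" "finite Q1" using Xsub unfolding X_def by (meson finite_lessThan finite_subset le_sup_iff)+
    have dj: "L \<inter> Q1 = {}" unfolding Q1_def Q_def by blast
    have b: "card X = card L + card Q1"
      unfolding X_def using card_Un_disjoint[OF fL dj] .
    have "S = X" using Lne by (simp add: S_def)
    hence "card S = card L + card Q1" using b by simp
    moreover have "m - 1 + 1 = m" using m3 by simp
    ultimately show ?thesis using a card_part Q2_le_Q1(1) nm by linarith
  qed
  have finS: "finite S" using S Xsub by (meson finite_lessThan finite_subset subset_trans)
  have "S \<noteq> {}" using cS m3 by auto
  have SV: "S \<subseteq> VV" using S Xsub by blast
  have cl: "\<And>x y. x \<in> S \<Longrightarrow> y \<in> S \<Longrightarrow> x \<noteq> y \<Longrightarrow> G2 x y" using S Xclique by blast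
  obtain p where p: "dm_path VV G2 p" "length p = card S"
    using clique_path[where S=S and V=VV and E=G2, OF finS SV \<open>S \<noteq> {}\<close> cl] by blast
  thus ?thesis using mp_ge[OF _ p(1)] cS by simp
next
  case True
  hence L: "L = {}" and H: "H = {}" using LH by auto
  have cp: "card Q1 + card Q2 = n" using card_part L H by simp
  have mm: "m - 1 + 1 = m" using m3 by simp
  have c1: "card Q1 = m - 1" "card Q2 = m - 1"
    using True cp Q2_le_Q1(1) nm mm by linarith+
  have Q1V: "Q1 \<subseteq> VV" unfolding Q1_def Q_def by blast
  have Q2V: "Q2 \<subseteq> VV" unfolding Q2_def Q_def by blast
  have finQ: "finite Q1" "finite Q2"
    using finite_subset[OF Q1V finite_lessThan] finite_subset[OF Q2V finite_lessThan] by blast+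
  have "card (f ` Q2) = card Q1" using c1 card_image[OF finj] by simp
  hence img: "f ` Q2 = Q1" by (rule card_subset_eq[OF finQ(1) fimg])
  have QV: "Q = VV" unfolding Q_def L H by simp
  have Q1Q: "Q1 \<subseteq> Q" unfolding Q1_def by blast
  have VQ: "VV = Q1 \<union> Q2" unfolding Q2_def using QV Q1Q by blast
  have d1: "d v = 1" if "v \<in> VV" for v
  proof (cases "v \<in> Q2")
    case True
    have fp: "f v \<in> Q1" "G1 v (f v)" using f_prop[OF True] by simp_all
    have "f v \<in> Q" using fp(1) unfolding Q1_def by blast
    moreover have "G1 (f v) v" using fp(2) symG[of v "f v"] by simp
    ultimately have "N v = {f v}" using c4 that by blast
    thus ?thesis by (simp add: dN)
  next
    case False
    hence "v \<in> Q1" using VQ that by blast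
    then obtain w where w: "w \<in> Q2" "v = f w" using img by blast
    have "w \<in> Q" using w(1) unfolding Q2_def by blast
    moreover have "G1 w v" using f_prop[OF w(1)] w(2) by simp
    ultimately have "N v = {w}" using c4 that by blast
    thus ?thesis by (simp add: dN)
  qed
  define ys where "ys = sorted_list_of_set Q1"
  have ys: "set ys = Q1" "distinct ys" "length ys = m - 1" using finQ c1 by (simp_all add: ys_def)
  have ysne: "ys \<noteq> []" using ys(3) m3 by (cases ys) auto
  define a where "a = last ys"
  have aQ: "a \<in> Q1" using ysne ys(1) a_def last_in_set by blast
  have aV: "a \<in> VV" using aQ Q1V by blast
  have "card (N a) = 1" using d1 aV dN by simp
  then obtain w where w: "N a = {w}" using card_1_singletonE by blast
  have "card (Q2 - {w}) \<ge> 1" using c1 m3 finQ(2) card_Diff_singleton_if[of Q2 w] by (cases "w \<in> Q2") auto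
  hence "Q2 - {w} \<noteq> {}" by (metis card.empty not_one_le_zero)
  then obtain b where b: "b \<in> Q2" "b \<noteq> w" by blast
  have bV: "b \<in> VV" using b(1) Q2V by blast
  have bQ1: "b \<notin> Q1" using b(1) unfolding Q2_def by blast
  have "\<not> G1 a b"
  proof
    assume "G1 a b"
    hence "b \<in> N a" using bV unfolding N_def by blast
    thus False using w b(2) by simp
  qed
  moreover have "a \<noteq> b" using aQ bQ1 by blast
  ultimately have ab: "G2 a b" using G2iff[OF aV bV] by simp
  define p where "p = ys @ [b]"
  have "dm_path VV G2 p"
  proof (rule dm_pathI)
    show "p \<noteq> []" by (simp add: p_def)
    show "distinct p" using ys(2) ys(1) bQ1 by (simp add: p_def)
    show sp: "set p \<subseteq> VV" using ys(1) bV Q1V by (auto simp: p_def)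
    have "map (deg VV G2) p = map (\<lambda>_. n - 2) p"
    proof (rule map_cong[OF refl])
      fix x assume "x \<in> set p"
      hence xV: "x \<in> VV" using sp by blast
      have "deg VV G2 x = n - 1 - d x" by (rule deg2[OF xV])
      thus "deg VV G2 x = n - 2" using d1[OF xV] by simp
    qed
    thus "sorted (map (deg VV G2) p)" by (simp add: map_replicate_const)
    fix i assume i: "Suc i < length p"
    show "G2 (p!i) (p!Suc i)"
    proof (cases "Suc i < length ys")
      case True
      hence pi: "p!i = ys!i" "p!Suc i = ys!Suc i" by (simp_all add: p_def nth_append)
      have "ys!i \<in> Q1" "ys!Suc i \<in> Q1" using True ys(1) nth_mem[of i ys] nth_mem[of "Suc i" ys] by auto
      hence inX: "ys!i \<in> X" "ys!Suc i \<in> X" unfolding X_def by blast+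
      have "ys!i \<noteq> ys!Suc i" using ys(2) True by (simp add: nth_eq_iff_index_eq)
      thus ?thesis using Xclique[OF inX] pi by simp
    next
      case False
      hence iy: "i = length ys - 1" "Suc i = length ys" using i by (simp_all add: p_def)
      have "p!i = a" using ysne iy(1) by (simp add: p_def nth_append a_def last_conv_nth)
      moreover have "p!Suc i = b" using iy(2) by (simp add: p_def nth_append)
      ultimately show ?thesis using ab by simp
    qed
  qed
  hence "length p \<le> mp VV G2" by (rule mp_ge[OF finite_lessThan])
  moreover have "length p = length ys + 1" by (simp add: p_def)
  ultimately show ?thesis using ys(3) mm by linarith
qed

end


theorem theorem1p4:
  fixes m :: nat
  assumes "m \<ge> 3"
  shows "M_num 3 m = 2 * (m - 1)"
proof -
  have arr: "arrows 3 m (2*(m-1))"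
    unfolding arrows_def
  proof (intro allI impI)
    fix n col assume nm: "2*(m-1) \<le> n" and tc: "two_colouring n col"
    show "3 \<le> mp {..<n} (colour_graph col 1) \<or> m \<le> mp {..<n} (colour_graph col 2)"
    proof (cases "3 \<le> mp {..<n} (colour_graph col 1)")
      case False
      interpret ub n m col using tc nm assms False by unfold_locales
      have "m \<le> mp VV G2" by (rule main)
      thus ?thesis by simp
    qed simp
  qed
  show ?thesis unfolding M_num_def
  proof (rule Least_equality)
    show "arrows 3 m (2*(m-1))" by (rule arr)
    fix y assume y: "arrows 3 m y"
    show "2*(m-1) \<le> y"
    proof (rule ccontr)
      assume "\<not> 2*(m-1) \<le> y"
      hence "y \<le> 2*m-3" using assms by linarith
      thus False using lower[OF assms] y by blast
    qed
  qed
qed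

end
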